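(* Let $\mathcal{G}\in\mathbf{G}$ be a periodic graph. For every $\lambda<0$ there exists a subspace $Y\subset H^1(\mathcal{G})$ with $\dim Y=3$ such that \[ \|w'\|_{L^2(\mathcal G)}^2+\lambda\|w\|_{L^2(\mathcal G)}^2\le\frac\lambda2\|w\|_{H^1(\mathcal{G})}^2\qquad\forall w\in Y. \]
   Context: $\mathbf{G}$: connected metric graphs with at most countably many edges, finite vertex degrees and $\inf_e|e|>0$. A periodic graph has infinitely many edges of uniformly bounded length arranged periodically (free cocompact $\mathbb Z^d$-action by isometries). $\|w\|_{H^1(\mathcal G)}^2=\|w'\|_{L^2}^2+\|w\|_{L^2}^2$. *)

theory Defs
  imports "HOL-Analysis.Analysis" "HOL-Library.Function_Algebras"
begin

text \<open>Edge e is
  identified with the interval [0, len e], 0 corresponding to src e and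
  len e to tgt e.\<close>

record ('v, 'e) mgraph =
  verts :: "'v set"
  edges :: "'e set"
  src :: "'e \<Rightarrow> 'v"
  tgt :: "'e \<Rightarrow> 'v"
  len :: "'e \<Rightarrow> real"

definition incident_edges :: "('v, 'e) mgraph \<Rightarrow> 'v \<Rightarrow> 'e set" where
  "incident_edges G v = {e \<in> edges G. src G e = v \<or> tgt G e = v}"

definition adj :: "('v, 'e) mgraph \<Rightarrow> ('v \<times> 'v) set" where
  "adj G = {(src G e, tgt G e) | e. e \<in> edges G}"

definition class_G :: "('v, 'e) mgraph \<Rightarrow> bool" where
  "class_G G \<longleftrightarrow>
     (\<forall>e\<in>edges G. src G e \<in> verts G \<and> tgt G e \<in> verts G \<and> 0 < len G e) \<and>
     countable (edges G) \<and>
     (\<forall>v\<in>verts G. finite (incident_edges G v)) \<and>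
     (\<exists>c>0. \<forall>e\<in>edges G. c \<le> len G e) \<and>
     verts G \<noteq> {} \<and>
     (\<forall>u\<in>verts G. \<forall>v\<in>verts G. (u, v) \<in> (adj G \<union> (adj G)\<inverse>)\<^sup>*)"

definition isom_aut :: "('v, 'e) mgraph \<Rightarrow> ('v \<Rightarrow> 'v) \<Rightarrow> ('e \<Rightarrow> 'e) \<Rightarrow> bool" where
  "isom_aut G \<phi> \<psi> \<longleftrightarrow>
     bij_betw \<phi> (verts G) (verts G) \<and> bij_betw \<psi> (edges G) (edges G) \<and>
     (\<forall>e\<in>edges G. len G (\<psi> e) = len G e \<and>
        ((src G (\<psi> e) = \<phi> (src G e) \<and> tgt G (\<psi> e) = \<phi> (tgt G e)) \<or>
         (src G (\<psi> e) = \<phi> (tgt G e) \<and> tgt G (\<psi> e) = \<phi> (src G e))))"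

text \<open>The group \<open>\<int>^d\<close>, as integer sequences vanishing from index d on.\<close>

definition Zd :: "nat \<Rightarrow> (nat \<Rightarrow> int) set" where
  "Zd d = {k. \<forall>i\<ge>d. k i = 0}"

text \<open>Periodic graph: infinitely many edges of uniformly bounded length, with a
  free cocompact action of \<open>\<int>^d\<close> by isometric automorphisms.
  Freeness on the metric graph: no nonzero group element fixes a vertex or
  maps an edge onto itself (in either orientation).\<close>

definition periodic :: "('v, 'e) mgraph \<Rightarrow> bool" where
  "periodic G \<longleftrightarrow> class_G G \<and> infinite (edges G) \<and>
     (\<exists>M. \<forall>e\<in>edges G. len G e \<le> M) \<and>
     (\<exists>d \<phi> \<psi>.
        (\<forall>k\<in>Zd d. isom_aut G (\<phi> k) (\<psi> k)) \<and>
        (\<forall>v\<in>verts G. \<phi> 0 v = v) \<and> (\<forall>e\<in>edges G. \<psi> 0 e = e) \<and>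
        (\<forall>k\<in>Zd d. \<forall>l\<in>Zd d. (\<forall>v\<in>verts G. \<phi> (k + l) v = \<phi> k (\<phi> l v)) \<and>
                             (\<forall>e\<in>edges G. \<psi> (k + l) e = \<psi> k (\<psi> l e))) \<and>
        (\<forall>k\<in>Zd d. k \<noteq> 0 \<longrightarrow>
            (\<forall>v\<in>verts G. \<phi> k v \<noteq> v) \<and> (\<forall>e\<in>edges G. \<psi> k e \<noteq> e)) \<and>
        (\<exists>F. finite F \<and> F \<subseteq> edges G \<and>
            (\<forall>e\<in>edges G. \<exists>k\<in>Zd d. \<exists>f\<in>F. \<psi> k f = e)) \<and>
        (\<exists>F. finite F \<and> F \<subseteq> verts G \<and>
            (\<forall>v\<in>verts G. \<exists>k\<in>Zd d. \<exists>f\<in>F. \<phi> k f = v)))"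

text \<open>Weak derivative on [0, l]: f is the integral of a square-integrable g
  (i.e. f is the continuous representative of an \<open>H^1(0,l)\<close> function).\<close>

definition weak_deriv_on :: "real \<Rightarrow> (real \<Rightarrow> real) \<Rightarrow> (real \<Rightarrow> real) \<Rightarrow> bool" where
  "weak_deriv_on l f g \<longleftrightarrow>
     g absolutely_integrable_on {0..l} \<and> (\<lambda>x. (g x)\<^sup>2) integrable_on {0..l} \<and>
     (\<forall>x\<in>{0..l}. f x = f 0 + integral {0..x} g)"

definition wderiv :: "real \<Rightarrow> (real \<Rightarrow> real) \<Rightarrow> real \<Rightarrow> real" where
  "wderiv l f = (SOME g. weak_deriv_on l f g)"

definition endpt :: "('v, 'e) mgraph \<Rightarrow> 'e \<Rightarrow> real \<Rightarrow> 'v" where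
  "endpt G e a = (if a = 0 then src G e else tgt G e)"

definition L2sq :: "('v, 'e) mgraph \<Rightarrow> ('e \<Rightarrow> real \<Rightarrow> real) \<Rightarrow> real" where
  "L2sq G w = (\<Sum>\<^sub>\<infinity>e\<in>edges G. integral {0..len G e} (\<lambda>x. (w e x)\<^sup>2))"

definition D2sq :: "('v, 'e) mgraph \<Rightarrow> ('e \<Rightarrow> real \<Rightarrow> real) \<Rightarrow> real" where
  "D2sq G w = (\<Sum>\<^sub>\<infinity>e\<in>edges G. integral {0..len G e} (\<lambda>x. (wderiv (len G e) (w e) x)\<^sup>2))"

definition H1sq :: "('v, 'e) mgraph \<Rightarrow> ('e \<Rightarrow> real \<Rightarrow> real) \<Rightarrow> real" where
  "H1sq G w = D2sq G w + L2sq G w"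

text \<open>Functions are normalised to vanish outside the
  edges, so that \<open>H^1(\<G>)\<close> is a set of genuine functions.\<close>

definition H1 :: "('v, 'e) mgraph \<Rightarrow> ('e \<Rightarrow> real \<Rightarrow> real) set" where
  "H1 G = {w.
     (\<forall>e. e \<notin> edges G \<longrightarrow> (\<forall>x. w e x = 0)) \<and>
     (\<forall>e\<in>edges G. (\<exists>g. weak_deriv_on (len G e) (w e) g) \<and>
                  (\<forall>x. x \<notin> {0..len G e} \<longrightarrow> w e x = 0)) \<and>
     (\<forall>e1\<in>edges G. \<forall>e2\<in>edges G. \<forall>a1\<in>{0, len G e1}. \<forall>a2\<in>{0, len G e2}.
        endpt G e1 a1 = endpt G e2 a2 \<longrightarrow> w e1 a1 = w e2 a2) \<and>
     (\<lambda>e. integral {0..len G e} (\<lambda>x. (w e x)\<^sup>2)) summable_on edges G \<and>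
     (\<lambda>e. integral {0..len G e} (\<lambda>x. (wderiv (len G e) (w e) x)\<^sup>2)) summable_on edges G}"

definition fscale :: "real \<Rightarrow> ('e \<Rightarrow> real \<Rightarrow> real) \<Rightarrow> ('e \<Rightarrow> real \<Rightarrow> real)" where
  "fscale c w = (\<lambda>e x. c * w e x)"

end

theory Submission
  imports Defs "HOL-Probability.Distribution_Functions"
begin


lemma ae_zero_unique:
  fixes h :: "real \<Rightarrow> real" and l :: real
  assumes hi: "h absolutely_integrable_on {0..l}"
    and z: "\<And>x. x \<in> {0..l} \<Longrightarrow> integral {0..x} h = 0"
  shows "negligible {x \<in> {0..l}. h x \<noteq> 0}"
proof -
  define H where "H = (\<lambda>x. indicator {0..l} x * h x)"
  have Hint: "integrable lebesgue H" using hi by (simp add: set_integrable_def H_def)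
  then have Hm: "H \<in> borel_measurable lebesgue" by auto
  then obtain g where gb: "g \<in> borel_measurable lborel" and Hg: "AE x in lborel. H x = g x"
    using completion_ex_borel_measurable_real by blast
  have Hg': "AE x in lebesgue. H x = g x" using Hg by (rule AE_completion)
  have gint1: "integrable lebesgue g"
    using integrable_cong_AE_imp[OF Hint measurable_completion[OF gb] Hg'] .
  have gint: "integrable lborel g"
    using gint1 gb by (simp add: integrable_completion)
  have key: "(LINT x|lborel. indicator {..t} x * g x) = 0" for t
  proof -
    have ib: "(\<lambda>x. indicator {..t} x * g x) \<in> borel_measurable lborel" using gb by measurable
    have "(LINT x|lborel. indicator {..t} x * g x) = (LINT x|lebesgue. indicator {..t} x * g x)"
      using ib by (simp add: integral_completion)
    also have "\<dots> = (LINT x|lebesgue. indicator {..t} x * H x)"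
      using Hg' by (intro integral_cong_AE) (auto intro!: measurable_completion[OF ib] borel_measurable_times Hm borel_measurable_indicator)
    also have "\<dots> = (LINT x|lebesgue. indicator {0..min t l} x * h x)"
      by (intro Bochner_Integration.integral_cong) (auto simp: H_def split: split_indicator)
    also have "\<dots> = (LINT x:{0..min t l}|lebesgue. h x)" by (simp add: set_lebesgue_integral_def)
    also have "\<dots> = integral {0..min t l} h"
    proof (rule set_lebesgue_integral_eq_integral(2))
      show "set_integrable lebesgue {0..min t l} h"
        using hi by (rule set_integrable_subset) auto
    qed
    also have "\<dots> = 0"
    proof (cases "0 \<le> min t l")
      case True then show ?thesis using z[of "min t l"] by auto
    next
      case False then show ?thesis by simp
    qed
    finally show ?thesis .
  qed
  define M1 where "M1 = density lborel (\<lambda>x. ennreal (g x))"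
  define M2 where "M2 = density lborel (\<lambda>x. ennreal (- g x))"
  have fin1: "(\<integral>\<^sup>+x. ennreal (g x) \<partial>lborel) < \<infinity>" and fin2: "(\<integral>\<^sup>+x. ennreal (- g x) \<partial>lborel) < \<infinity>"
    using gint by (auto simp: real_integrable_def top.not_eq_extremum)
  have fb1: "finite_borel_measure M1"
  proof -
    have "finite_measure M1" unfolding M1_def
      by (rule finite_measureI) (use fin1 gb in \<open>auto simp: emeasure_density\<close>)
    then show ?thesis unfolding finite_borel_measure_def finite_borel_measure_axioms_def M1_def by simp
  qed
  have fb2: "finite_borel_measure M2"
  proof -
    have "finite_measure M2" unfolding M2_def
      by (rule finite_measureI) (use fin2 gb in \<open>auto simp: emeasure_density\<close>)
    then show ?thesis unfolding finite_borel_measure_def finite_borel_measure_axioms_def M2_def by simp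
  qed
  have "cdf M1 = cdf M2"
  proof
    fix t
    have ii: "integrable lborel (\<lambda>x. indicator {..t} x * g x)"
      using integrable_real_mult_indicator[of "{..t}" lborel g] gint by (simp add: mult.commute)
    have "0 = enn2real (\<integral>\<^sup>+x. ennreal (indicator {..t} x * g x) \<partial>lborel)
             - enn2real (\<integral>\<^sup>+x. ennreal (- (indicator {..t} x * g x)) \<partial>lborel)"
      using key[of t] real_lebesgue_integral_def[OF ii] by simp
    moreover have "(\<integral>\<^sup>+x. ennreal (indicator {..t} x * g x) \<partial>lborel) = (\<integral>\<^sup>+x. ennreal (g x) * indicator {..t} x \<partial>lborel)"
      by (intro nn_integral_cong) (auto split: split_indicator)
    moreover have "(\<integral>\<^sup>+x. ennreal (- (indicator {..t} x * g x)) \<partial>lborel) = (\<integral>\<^sup>+x. ennreal (- g x) * indicator {..t} x \<partial>lborel)"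
      by (intro nn_integral_cong) (auto split: split_indicator)
    ultimately show "cdf M1 t = cdf M2 t"
      using gb by (simp add: cdf_def M1_def M2_def measure_def emeasure_density)
  qed
  then have "M1 = M2" using cdf_unique' fb1 fb2 by blast
  then have "AE x in lborel. ennreal (g x) = ennreal (- g x)"
    unfolding M1_def M2_def
    by (subst (asm) finite_density_unique) (use gb fin1 in auto)
  then have "AE x in lborel. g x = 0"
    by eventually_elim (metis ennreal_eq_0_iff ennreal_neg neg_0_le_iff_le order.antisym ennreal_eq_zero_iff linorder_le_cases neg_le_0_iff_le)
  then have "AE x in lebesgue. H x = 0" using Hg' by (auto dest: AE_completion elim: AE_mp)
  moreover have "{x \<in> space lebesgue. \<not> H x = 0} \<in> sets lebesgue"
    using Hm by measurable
  ultimately have "{x \<in> space lebesgue. H x \<noteq> 0} \<in> null_sets lebesgue"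
    by (subst (asm) AE_iff_null) auto
  moreover have "{x \<in> space lebesgue. H x \<noteq> 0} = {x \<in> {0..l}. h x \<noteq> 0}"
    by (auto simp: H_def split: split_indicator)
  ultimately show ?thesis using negligible_iff_null_sets null_setsD2 by metis
qed



lemma wd_const:
  assumes "0 \<le> l" and "\<And>x. x \<in> {0..l} \<Longrightarrow> f x = a + s * x"
  shows "weak_deriv_on l f (\<lambda>_. s)"
  unfolding weak_deriv_on_def
proof (intro conjI ballI)
  show "(\<lambda>_. s) absolutely_integrable_on {0..l}" by (rule absolutely_integrable_on_const) simp
  show "(\<lambda>x. s\<^sup>2) integrable_on {0..l}" by (rule integrable_const_ivl)
  fix x assume x: "x \<in> {0..l}"
  then show "f x = f 0 + integral {0..x} (\<lambda>_. s)" using assms(1) assms(2)[OF x] assms(2)[of 0] by auto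
qed

lemma wd_unique_sq:
  assumes l: "0 \<le> l" and wd: "weak_deriv_on l f g" and f: "\<And>x. x \<in> {0..l} \<Longrightarrow> f x = a + s * x"
  shows "integral {0..l} (\<lambda>x. (g x)\<^sup>2) = s\<^sup>2 * l"
proof -
  have ga: "g absolutely_integrable_on {0..l}" and gf: "\<And>x. x \<in> {0..l} \<Longrightarrow> f x = f 0 + integral {0..x} g"
    using wd unfolding weak_deriv_on_def by blast+
  define h where "h = (\<lambda>x. g x - s)"
  have ca: "(\<lambda>_. s) absolutely_integrable_on {0..l}"
    by (rule absolutely_integrable_on_const) simp
  have ha: "h absolutely_integrable_on {0..l}" unfolding h_def
    by (rule set_integral_diff(1)[OF ga ca])
  have gI: "g integrable_on {0..l}" by (rule set_lebesgue_integral_eq_integral(1)[OF ga])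
  have "integral {0..x} h = 0" if x: "x \<in> {0..l}" for x
  proof -
    have gi: "g integrable_on {0..x}"
      using x by (intro integrable_on_subinterval[OF gI]) auto
    have "integral {0..x} h = integral {0..x} g - integral {0..x} (\<lambda>_. s)"
      unfolding h_def by (rule integral_diff[OF gi integrable_const_ivl])
    also have "integral {0..x} g = s * x" using gf[OF x] f[OF x] f[of 0] l by simp
    also have "integral {0..x} (\<lambda>_. s) = s * x" using x by simp
    finally show ?thesis by simp
  qed
  then have neg: "negligible {x \<in> {0..l}. h x \<noteq> 0}" using ae_zero_unique[OF ha] by blast
  have "integral {0..l} (\<lambda>x. (g x)\<^sup>2) = integral {0..l} (\<lambda>x. s\<^sup>2)"
    by (rule integral_spike[OF neg]) (simp add: h_def)
  then show ?thesis using l by simp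
qed

definition lin :: "('v, 'e) mgraph \<Rightarrow> ('v \<Rightarrow> real) \<Rightarrow> 'e \<Rightarrow> real \<Rightarrow> real" where
  "lin G h e x = (if e \<in> edges G \<and> x \<in> {0..len G e}
      then h (src G e) + (h (tgt G e) - h (src G e)) / len G e * x else 0)"

lemma lin_D_edge:
  assumes "e \<in> edges G" "0 < len G e"
  shows "integral {0..len G e} (\<lambda>x. (wderiv (len G e) (lin G h e) x)\<^sup>2)
         = (h (tgt G e) - h (src G e))\<^sup>2 / len G e"
proof -
  let ?l = "len G e" and ?s = "(h (tgt G e) - h (src G e)) / len G e"
  have f: "\<And>x. x \<in> {0..?l} \<Longrightarrow> lin G h e x = h (src G e) + ?s * x"
    using assms by (auto simp: lin_def)
  have ex: "weak_deriv_on ?l (lin G h e) (\<lambda>_. ?s)" using wd_const[OF _ f] assms by auto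
  have "weak_deriv_on ?l (lin G h e) (wderiv ?l (lin G h e))"
    unfolding wderiv_def by (rule someI[where P="weak_deriv_on ?l (lin G h e)", OF ex])
  from wd_unique_sq[OF _ this f] assms show ?thesis by (simp add: power2_eq_square)
qed

lemma lin_wd_ex:
  assumes "e \<in> edges G" "0 < len G e"
  shows "\<exists>g. weak_deriv_on (len G e) (lin G h e) g"
  using wd_const[of "len G e" "lin G h e" "h (src G e)" "(h (tgt G e) - h (src G e)) / len G e"] assms
  by (auto simp: lin_def)

lemma lin_L_edge_nonneg: "0 \<le> integral {0..len G e} (\<lambda>x. (lin G h e x)\<^sup>2)"
proof (cases "len G e < 0")
  case True then show ?thesis by simp
next
  case False
  have "(\<lambda>x. (lin G h e x)\<^sup>2) integrable_on {0..len G e}"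
  proof (cases "e \<in> edges G")
    case True
    have "(\<lambda>x. (h (src G e) + (h (tgt G e) - h (src G e)) / len G e * x)\<^sup>2) integrable_on {0..len G e}"
      by (intro integrable_continuous_interval continuous_intros)
    then show ?thesis by (rule integrable_eq) (auto simp: lin_def True)
  next
    case False then show ?thesis by (simp add: lin_def integrable_0)
  qed
  then show ?thesis by (rule integral_nonneg) simp
qed

lemma lin_L_edge_const:
  assumes "e \<in> edges G" "0 < len G e" "h (src G e) = a" "h (tgt G e) = a"
  shows "integral {0..len G e} (\<lambda>x. (lin G h e x)\<^sup>2) = a\<^sup>2 * len G e"
proof -
  have "integral {0..len G e} (\<lambda>x. (lin G h e x)\<^sup>2) = integral {0..len G e} (\<lambda>x. a\<^sup>2)"
    by (rule integral_cong) (use assms in \<open>auto simp: lin_def\<close>)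
  then show ?thesis using assms by simp
qed

lemma lin_props:
  assumes cG: "class_G G" and S: "finite S" "S \<subseteq> edges G"
    and z: "\<And>e. e \<in> edges G \<Longrightarrow> e \<notin> S \<Longrightarrow> h (src G e) = 0 \<and> h (tgt G e) = 0"
  shows "lin G h \<in> H1 G"
    and "D2sq G (lin G h) = (\<Sum>e\<in>S. (h (tgt G e) - h (src G e))\<^sup>2 / len G e)"
    and "L2sq G (lin G h) = (\<Sum>e\<in>S. integral {0..len G e} (\<lambda>x. (lin G h e x)\<^sup>2))"
proof -
  define fD where "fD = (\<lambda>e. integral {0..len G e} (\<lambda>x. (wderiv (len G e) (lin G h e) x)\<^sup>2))"
  define fL where "fL = (\<lambda>e. integral {0..len G e} (\<lambda>x. (lin G h e x)\<^sup>2))"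
  have lpos: "\<And>e. e \<in> edges G \<Longrightarrow> 0 < len G e" using cG by (auto simp: class_G_def)
  have Dz: "fD e = 0" if "e \<in> edges G - S" for e
  proof -
    have "fD e = (h (tgt G e) - h (src G e))\<^sup>2 / len G e"
      unfolding fD_def using that lpos by (intro lin_D_edge) auto
    then show ?thesis using z[of e] that by simp
  qed
  have Lz: "fL e = 0" if "e \<in> edges G - S" for e
    unfolding fL_def using that lpos z[of e] by (intro lin_L_edge_const[of e G h 0, simplified]) auto
  have sD: "fD summable_on edges G"
  proof -
    have "fD summable_on S" using S(1) by (rule summable_on_finite)
    moreover have "fD summable_on S \<longleftrightarrow> fD summable_on edges G"
      by (rule summable_on_cong_neutral) (use Dz S(2) in auto)
    ultimately show ?thesis by simp
  qed
  have sL: "fL summable_on edges G"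
  proof -
    have "fL summable_on S" using S(1) by (rule summable_on_finite)
    moreover have "fL summable_on S \<longleftrightarrow> fL summable_on edges G"
      by (rule summable_on_cong_neutral) (use Lz S(2) in auto)
    ultimately show ?thesis by simp
  qed
  have c1: "\<forall>e. e \<notin> edges G \<longrightarrow> (\<forall>x. lin G h e x = 0)" by (simp add: lin_def)
  have c2: "\<forall>e\<in>edges G. (\<exists>g. weak_deriv_on (len G e) (lin G h e) g) \<and>
                  (\<forall>x. x \<notin> {0..len G e} \<longrightarrow> lin G h e x = 0)"
  proof (intro ballI conjI)
    fix e assume e: "e \<in> edges G"
    show "\<exists>g. weak_deriv_on (len G e) (lin G h e) g" by (rule lin_wd_ex[OF e lpos[OF e]])
    show "\<forall>x. x \<notin> {0..len G e} \<longrightarrow> lin G h e x = 0" by (simp add: lin_def)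
  qed
  have ev: "lin G h e a = h (endpt G e a)" if "e \<in> edges G" "a \<in> {0, len G e}" for e a
    using that lpos[OF that(1)] by (auto simp: lin_def endpt_def)
  have c3: "\<forall>e1\<in>edges G. \<forall>e2\<in>edges G. \<forall>a1\<in>{0, len G e1}. \<forall>a2\<in>{0, len G e2}.
        endpt G e1 a1 = endpt G e2 a2 \<longrightarrow> lin G h e1 a1 = lin G h e2 a2"
    using ev by metis
  show "lin G h \<in> H1 G"
    unfolding H1_def mem_Collect_eq by (intro conjI c1 c2 c3 sD[unfolded fD_def] sL[unfolded fL_def])
  have "D2sq G (lin G h) = infsum fD S"
    unfolding D2sq_def fD_def[symmetric] by (rule infsum_cong_neutral) (use Dz S in auto)
  also have "\<dots> = sum fD S" using S(1) by (rule infsum_finite)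
  also have "\<dots> = (\<Sum>e\<in>S. (h (tgt G e) - h (src G e))\<^sup>2 / len G e)"
    by (rule sum.cong) (use S lpos in \<open>auto simp: fD_def intro!: lin_D_edge\<close>)
  finally show "D2sq G (lin G h) = (\<Sum>e\<in>S. (h (tgt G e) - h (src G e))\<^sup>2 / len G e)" .
  have "L2sq G (lin G h) = infsum fL S"
    unfolding L2sq_def fL_def[symmetric] by (rule infsum_cong_neutral) (use Lz S in auto)
  also have "\<dots> = sum fL S" using S(1) by (rule infsum_finite)
  finally show "L2sq G (lin G h) = (\<Sum>e\<in>S. integral {0..len G e} (\<lambda>x. (lin G h e x)\<^sup>2))"
    by (simp add: fL_def)
qed

lemma lin_comb:
  "lin G (\<lambda>v. a * h1 v + b * h2 v + c * h3 v) = fscale a (lin G h1) + fscale b (lin G h2) + fscale c (lin G h3)"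
  by (auto simp: fun_eq_iff lin_def fscale_def ring_distribs diff_divide_distrib add_divide_distrib)

lemma vs_fscale: "vector_space (fscale :: real \<Rightarrow> ('e \<Rightarrow> real \<Rightarrow> real) \<Rightarrow> _)"
proof
  fix a b :: real and x y :: "'e \<Rightarrow> real \<Rightarrow> real"
  show "fscale a (x + y) = fscale a x + fscale a y" by (simp add: fscale_def fun_eq_iff distrib_left)
  show "fscale (a + b) x = fscale a x + fscale b x" by (simp add: fscale_def fun_eq_iff distrib_right)
  show "fscale a (fscale b x) = fscale (a * b) x" by (simp add: fscale_def fun_eq_iff)
  show "fscale 1 x = x" by (simp add: fscale_def fun_eq_iff)
qed



lemma Zd_0[simp]: "0 \<in> Zd d" by (simp add: Zd_def)
lemma Zd_add[simp]: "k \<in> Zd d \<Longrightarrow> l \<in> Zd d \<Longrightarrow> k + l \<in> Zd d" by (simp add: Zd_def)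
lemma Zd_uminus[simp]: "k \<in> Zd d \<Longrightarrow> - k \<in> Zd d" by (simp add: Zd_def)
lemma Zd_diff[simp]: "k \<in> Zd d \<Longrightarrow> l \<in> Zd d \<Longrightarrow> k - l \<in> Zd d" by (simp add: Zd_def)

lemma finite_subsingleton: "(\<And>x y. x \<in> A \<Longrightarrow> y \<in> A \<Longrightarrow> x = y) \<Longrightarrow> finite A"
  by (metis finite.simps is_singletonI' is_singleton_the_elem)

locale pg =
  fixes G :: "('v, 'e) mgraph" and d :: nat
    and \<phi> :: "(nat \<Rightarrow> int) \<Rightarrow> 'v \<Rightarrow> 'v" and \<psi> :: "(nat \<Rightarrow> int) \<Rightarrow> 'e \<Rightarrow> 'e"
    and FE :: "'e set" and FV :: "'v set"
  assumes cG: "class_G G" and inf: "infinite (edges G)"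
    and aut: "\<And>k. k \<in> Zd d \<Longrightarrow> isom_aut G (\<phi> k) (\<psi> k)"
    and phi0: "\<And>v. v \<in> verts G \<Longrightarrow> \<phi> 0 v = v"
    and psi0: "\<And>e. e \<in> edges G \<Longrightarrow> \<psi> 0 e = e"
    and phiadd: "\<And>k l v. k \<in> Zd d \<Longrightarrow> l \<in> Zd d \<Longrightarrow> v \<in> verts G \<Longrightarrow> \<phi> (k + l) v = \<phi> k (\<phi> l v)"
    and psiadd: "\<And>k l e. k \<in> Zd d \<Longrightarrow> l \<in> Zd d \<Longrightarrow> e \<in> edges G \<Longrightarrow> \<psi> (k + l) e = \<psi> k (\<psi> l e)"
    and phifree: "\<And>k v. k \<in> Zd d \<Longrightarrow> k \<noteq> 0 \<Longrightarrow> v \<in> verts G \<Longrightarrow> \<phi> k v \<noteq> v"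
    and psifree: "\<And>k e. k \<in> Zd d \<Longrightarrow> k \<noteq> 0 \<Longrightarrow> e \<in> edges G \<Longrightarrow> \<psi> k e \<noteq> e"
    and FE: "finite FE" "FE \<subseteq> edges G" "\<And>e. e \<in> edges G \<Longrightarrow> \<exists>k\<in>Zd d. \<exists>f\<in>FE. \<psi> k f = e"
    and FV: "finite FV" "FV \<subseteq> verts G" "\<And>v. v \<in> verts G \<Longrightarrow> \<exists>k\<in>Zd d. \<exists>f\<in>FV. \<phi> k f = v"
begin

lemma lpos: "e \<in> edges G \<Longrightarrow> 0 < len G e"
  and src_in: "e \<in> edges G \<Longrightarrow> src G e \<in> verts G"
  and tgt_in: "e \<in> edges G \<Longrightarrow> tgt G e \<in> verts G"
  using cG by (auto simp: class_G_def)

lemma c0_ex: "\<exists>c>0. \<forall>e\<in>edges G. c \<le> len G e"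
  using cG by (auto simp: class_G_def)

lemma phi_in: "k \<in> Zd d \<Longrightarrow> v \<in> verts G \<Longrightarrow> \<phi> k v \<in> verts G"
  using aut[of k] unfolding isom_aut_def bij_betw_def by auto

lemma psi_in: "k \<in> Zd d \<Longrightarrow> e \<in> edges G \<Longrightarrow> \<psi> k e \<in> edges G"
  using aut[of k] unfolding isom_aut_def bij_betw_def by auto

lemma psi_ends: "k \<in> Zd d \<Longrightarrow> e \<in> edges G \<Longrightarrow>
   (src G (\<psi> k e) = \<phi> k (src G e) \<and> tgt G (\<psi> k e) = \<phi> k (tgt G e)) \<or>
   (src G (\<psi> k e) = \<phi> k (tgt G e) \<and> tgt G (\<psi> k e) = \<phi> k (src G e))"
  using aut[of k] unfolding isom_aut_def by auto

lemma phi_inj: assumes "k \<in> Zd d" "k' \<in> Zd d" "v \<in> verts G" "\<phi> k v = \<phi> k' v" shows "k = k'"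
proof (rule ccontr)
  assume ne: "k \<noteq> k'"
  have "\<phi> (- k' + k) v = \<phi> (- k') (\<phi> k v)" using assms by (intro phiadd) auto
  also have "\<dots> = \<phi> (- k') (\<phi> k' v)" using assms by simp
  also have "\<dots> = \<phi> (- k' + k') v" using assms by (intro phiadd[symmetric]) auto
  also have "\<dots> = v" using assms phi0 by simp
  finally show False using phifree[of "- k' + k" v] assms ne by (auto simp: algebra_simps)
qed

lemma psi_inj: assumes "k \<in> Zd d" "k' \<in> Zd d" "e \<in> edges G" "\<psi> k e = \<psi> k' e" shows "k = k'"
proof (rule ccontr)
  assume ne: "k \<noteq> k'"
  have "\<psi> (- k' + k) e = \<psi> (- k') (\<psi> k e)" using assms by (intro psiadd) auto
  also have "\<dots> = \<psi> (- k') (\<psi> k' e)" using assms by simp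
  also have "\<dots> = \<psi> (- k' + k') e" using assms by (intro psiadd[symmetric]) auto
  also have "\<dots> = e" using assms psi0 by simp
  finally show False using psifree[of "- k' + k" e] assms ne by (auto simp: algebra_simps)
qed

lemma d_pos: "0 < d"
proof (rule ccontr)
  assume "\<not> 0 < d"
  then have d0: "d = 0" by simp
  have "Zd d = {0}" using d0 by (auto simp: Zd_def fun_eq_iff)
  then have "edges G \<subseteq> FE" using FE(3) psi0 FE(2) by fastforce
  then show False using FE(1) inf finite_subset by blast
qed

definition kap :: "'v \<Rightarrow> nat \<Rightarrow> int" where
  "kap v = (SOME k. k \<in> Zd d \<and> (\<exists>f\<in>FV. \<phi> k f = v))"

lemma kap: assumes "v \<in> verts G" shows "kap v \<in> Zd d \<and> (\<exists>f\<in>FV. \<phi> (kap v) f = v)"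
proof -
  have "\<exists>k. k \<in> Zd d \<and> (\<exists>f\<in>FV. \<phi> k f = v)" using FV(3)[OF assms] by blast
  then show ?thesis unfolding kap_def by (rule someI_ex)
qed

definition J :: "(nat \<Rightarrow> int) set" where
  "J = {j \<in> Zd d. \<exists>g\<in>FV. \<exists>g'\<in>FV. \<phi> j g' = g}"

lemma finite_J: "finite J"
proof -
  have "J = (\<Union>g\<in>FV. \<Union>g'\<in>FV. {j \<in> Zd d. \<phi> j g' = g})" by (auto simp: J_def)
  moreover have "finite {j \<in> Zd d. \<phi> j g' = g}" if "g' \<in> FV" for g g'
    by (rule finite_subsingleton) (use that FV(2) phi_inj in blast)
  ultimately show ?thesis using FV(1) by auto
qed

lemma kap_shift: assumes k: "k \<in> Zd d" and v: "v \<in> verts G"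
  shows "kap (\<phi> k v) - k - kap v \<in> J"
proof -
  obtain g where g: "g \<in> FV" "\<phi> (kap v) g = v" using kap[OF v] by blast
  have kv: "kap v \<in> Zd d" using kap[OF v] by blast
  have w: "\<phi> k v \<in> verts G" using phi_in[OF k v] .
  obtain g' where g': "g' \<in> FV" "\<phi> (kap (\<phi> k v)) g' = \<phi> k v" using kap[OF w] by blast
  have kw: "kap (\<phi> k v) \<in> Zd d" using kap[OF w] by blast
  have gv: "g \<in> verts G" "g' \<in> verts G" using g g' FV(2) by auto
  define j where "j = kap (\<phi> k v) - k - kap v"
  have jZ: "j \<in> Zd d" using k kv kw by (simp add: j_def)
  have e1: "\<phi> k v = \<phi> (k + kap v) g" using phiadd[OF k kv gv(1)] g by simp
  have "\<phi> j g' = \<phi> (- (k + kap v) + kap (\<phi> k v)) g'" by (simp add: j_def algebra_simps)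
  also have "\<dots> = \<phi> (- (k + kap v)) (\<phi> (kap (\<phi> k v)) g')" using k kv kw gv by (intro phiadd) auto
  also have "\<dots> = \<phi> (- (k + kap v)) (\<phi> (k + kap v) g)" using g' e1 by simp
  also have "\<dots> = \<phi> (- (k + kap v) + (k + kap v)) g" using k kv gv by (intro phiadd[symmetric]) auto
  also have "\<dots> = g" using phi0 gv by simp
  finally show ?thesis using jZ g g' by (auto simp: J_def j_def)
qed


definition nrm :: "(nat \<Rightarrow> int) \<Rightarrow> int" where
  "nrm k = Max ((\<lambda>i. \<bar>k i\<bar>) ` {..<d})"

lemma nrm_le: "nrm k \<le> r \<longleftrightarrow> (\<forall>i<d. \<bar>k i\<bar> \<le> r)"
  unfolding nrm_def using d_pos by (subst Max_le_iff) auto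

lemma comp_le: "i < d \<Longrightarrow> \<bar>k i\<bar> \<le> nrm k"
  using nrm_le[of k "nrm k"] by auto

lemma nrm_nonneg: "0 \<le> nrm k"
  using comp_le[of 0 k] d_pos by linarith

lemma nrm_add: "nrm (a + b) \<le> nrm a + nrm b"
  unfolding nrm_le using comp_le[of _ a] comp_le[of _ b] by (auto intro: order.trans[OF abs_triangle_ineq] add_mono)

lemma nrm_diff: "nrm (a - b) \<le> nrm a + nrm b"
  unfolding nrm_le using comp_le[of _ a] comp_le[of _ b] by (auto intro: order.trans[OF abs_triangle_ineq4] add_mono)

lemma nrm_sym: "nrm (a - b) = nrm (b - a)"
  unfolding nrm_def by (simp add: abs_minus_commute)

lemma nrm_rev: "nrm a - nrm b \<le> nrm (a - b)"
proof -
  have "nrm a = nrm ((a - b) + b)" by simp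
  also have "\<dots> \<le> nrm (a - b) + nrm b" by (rule nrm_add)
  finally show ?thesis by simp
qed

definition C1 :: int where "C1 = (\<Sum>j\<in>J. nrm j)"

lemma K1: "k \<in> Zd d \<Longrightarrow> v \<in> verts G \<Longrightarrow> nrm (kap (\<phi> k v) - k - kap v) \<le> C1"
  unfolding C1_def by (rule member_le_sum[OF kap_shift]) (simp_all add: nrm_nonneg finite_J)

lemma C1_nonneg: "0 \<le> C1" unfolding C1_def by (intro sum_nonneg) (simp add: nrm_nonneg)

lemma pair_lip: assumes "k \<in> Zd d" "x \<in> verts G" "y \<in> verts G"
  shows "nrm (kap (\<phi> k x) - kap (\<phi> k y)) \<le> 2 * C1 + nrm (kap x) + nrm (kap y)"
proof -
  have "kap (\<phi> k x) - kap (\<phi> k y) = ((kap (\<phi> k x) - k - kap x) - (kap (\<phi> k y) - k - kap y)) + (kap x - kap y)"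
    by (simp add: algebra_simps)
  then have "nrm (kap (\<phi> k x) - kap (\<phi> k y)) \<le> nrm ((kap (\<phi> k x) - k - kap x) - (kap (\<phi> k y) - k - kap y)) + nrm (kap x - kap y)"
    by (metis nrm_add)
  also have "\<dots> \<le> (C1 + C1) + (nrm (kap x) + nrm (kap y))"
    using K1[OF assms(1,2)] K1[OF assms(1,3)] nrm_diff[of "kap (\<phi> k x) - k - kap x" "kap (\<phi> k y) - k - kap y"]
      nrm_diff[of "kap x" "kap y"] by linarith
  finally show ?thesis by simp
qed

lemma loc_lip: assumes "k \<in> Zd d" "x \<in> verts G"
  shows "nrm (k - c) \<le> nrm (kap (\<phi> k x) - c) + C1 + nrm (kap x)"
proof -
  have "k - c = (kap (\<phi> k x) - c) - ((kap (\<phi> k x) - k - kap x) + kap x)" by (simp add: algebra_simps)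
  then have "nrm (k - c) \<le> nrm (kap (\<phi> k x) - c) + nrm ((kap (\<phi> k x) - k - kap x) + kap x)"
    by (metis nrm_diff)
  also have "\<dots> \<le> nrm (kap (\<phi> k x) - c) + (C1 + nrm (kap x))"
    using K1[OF assms] nrm_add[of "kap (\<phi> k x) - k - kap x" "kap x"] by linarith
  finally show ?thesis by simp
qed

lemma plat_lip: assumes "k \<in> Zd d" "x \<in> verts G"
  shows "nrm (kap (\<phi> k x) - c) \<le> nrm (k - c) + C1 + nrm (kap x)"
proof -
  have "kap (\<phi> k x) - c = (kap (\<phi> k x) - k - kap x) + ((k - c) + kap x)" by (simp add: algebra_simps)
  then have "nrm (kap (\<phi> k x) - c) \<le> nrm (kap (\<phi> k x) - k - kap x) + nrm ((k - c) + kap x)"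
    by (metis nrm_add)
  also have "\<dots> \<le> C1 + (nrm (k - c) + nrm (kap x))"
    using K1[OF assms] nrm_add[of "k - c" "kap x"] by linarith
  finally show ?thesis by simp
qed

definition C5 :: int where "C5 = (\<Sum>f\<in>FE. nrm (kap (src G f)) + nrm (kap (tgt G f)))"

lemma C5_le: "f \<in> FE \<Longrightarrow> nrm (kap (src G f)) + nrm (kap (tgt G f)) \<le> C5"
  unfolding C5_def using FE(1) by (intro member_le_sum) (auto simp: nrm_nonneg add_nonneg_nonneg)

lemma C5_nonneg: "0 \<le> C5" unfolding C5_def by (intro sum_nonneg) (simp add: nrm_nonneg add_nonneg_nonneg)

lemma edge_lip: assumes e: "e \<in> edges G"
  shows "nrm (kap (tgt G e) - kap (src G e)) \<le> 2 * C1 + C5"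
proof -
  obtain k f where k: "k \<in> Zd d" and f: "f \<in> FE" and ef: "\<psi> k f = e" using FE(3)[OF e] by blast
  have fE: "f \<in> edges G" using f FE(2) by auto
  have ab: "src G f \<in> verts G" "tgt G f \<in> verts G" using fE src_in tgt_in by auto
  have C: "nrm (kap (src G f)) + nrm (kap (tgt G f)) \<le> C5" by (rule C5_le[OF f])
  from psi_ends[OF k fE] show ?thesis
  proof
    assume h: "src G (\<psi> k f) = \<phi> k (src G f) \<and> tgt G (\<psi> k f) = \<phi> k (tgt G f)"
    then show ?thesis using pair_lip[OF k ab(2) ab(1)] C ef by auto
  next
    assume h: "src G (\<psi> k f) = \<phi> k (tgt G f) \<and> tgt G (\<psi> k f) = \<phi> k (src G f)"
    then show ?thesis using pair_lip[OF k ab(1) ab(2)] C ef by auto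
  qed
qed

lemma edge_loc: assumes k: "k \<in> Zd d" and f: "f \<in> FE" and u: "u = src G (\<psi> k f) \<or> u = tgt G (\<psi> k f)"
  shows "nrm (k - c) \<le> nrm (kap u - c) + C1 + C5"
proof -
  have fE: "f \<in> edges G" using f FE(2) by auto
  have ab: "src G f \<in> verts G" "tgt G f \<in> verts G" using fE src_in tgt_in by auto
  have C: "nrm (kap (src G f)) + nrm (kap (tgt G f)) \<le> C5" by (rule C5_le[OF f])
  have "u = \<phi> k (src G f) \<or> u = \<phi> k (tgt G f)" using psi_ends[OF k fE] u by auto
  then show ?thesis
    using loc_lip[OF k ab(1), of c] loc_lip[OF k ab(2), of c] C nrm_nonneg[of "kap (src G f)"] nrm_nonneg[of "kap (tgt G f)"]
    by auto
qed

definition f0 :: 'e where "f0 = (SOME e. e \<in> edges G)"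

lemma f0: "f0 \<in> edges G"
proof -
  have "edges G \<noteq> {}" using inf by auto
  then show ?thesis unfolding f0_def by (simp add: some_in_eq)
qed

definition C6 :: int where "C6 = nrm (kap (src G f0)) + nrm (kap (tgt G f0))"

lemma C6_nonneg: "0 \<le> C6" unfolding C6_def by (simp add: nrm_nonneg add_nonneg_nonneg)

lemma plat_loc: assumes k: "k \<in> Zd d" and u: "u = src G (\<psi> k f0) \<or> u = tgt G (\<psi> k f0)"
  shows "nrm (kap u - c) \<le> nrm (k - c) + C1 + C6"
proof -
  have ab: "src G f0 \<in> verts G" "tgt G f0 \<in> verts G" using f0 src_in tgt_in by auto
  have "u = \<phi> k (src G f0) \<or> u = \<phi> k (tgt G f0)" using psi_ends[OF k f0] u by auto
  then show ?thesis
    using plat_lip[OF k ab(1), of c] plat_lip[OF k ab(2), of c] nrm_nonneg[of "kap (src G f0)"] nrm_nonneg[of "kap (tgt G f0)"]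
    unfolding C6_def by auto
qed

definition Qc :: "(nat \<Rightarrow> int) \<Rightarrow> int \<Rightarrow> (nat \<Rightarrow> int) set" where
  "Qc c r = {k \<in> Zd d. nrm (k - c) \<le> r}"

lemma Qc_card: assumes r: "0 \<le> r" shows "finite (Qc c r)" "card (Qc c r) = nat (2 * r + 1) ^ d"
proof -
  define P where "P = PiE {..<d} (\<lambda>i. {c i - r..c i + r})"
  have bij: "bij_betw (\<lambda>k. restrict k {..<d}) (Qc c r) P"
  proof (rule bij_betw_imageI)
    show "inj_on (\<lambda>k. restrict k {..<d}) (Qc c r)"
    proof (rule inj_onI)
      fix x y assume x: "x \<in> Qc c r" and y: "y \<in> Qc c r" and eq: "restrict x {..<d} = restrict y {..<d}"
      show "x = y"
      proof
        fix i show "x i = y i"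
        proof (cases "i < d")
          case True then show ?thesis using eq by (metis lessThan_iff restrict_apply')
        next
          case False then show ?thesis using x y by (auto simp: Qc_def Zd_def)
        qed
      qed
    qed
    show "(\<lambda>k. restrict k {..<d}) ` Qc c r = P"
    proof
      show "(\<lambda>k. restrict k {..<d}) ` Qc c r \<subseteq> P"
      proof (rule image_subsetI)
        fix k assume "k \<in> Qc c r"
        then have "\<forall>i\<in>{..<d}. k i \<in> {c i - r..c i + r}" by (auto simp: Qc_def nrm_le abs_le_iff)
        then show "restrict k {..<d} \<in> P" unfolding P_def by (simp only: restrict_PiE_iff)
      qed
      show "P \<subseteq> (\<lambda>k. restrict k {..<d}) ` Qc c r"
      proof
        fix p assume p: "p \<in> P"
        define k where "k = (\<lambda>i. if i < d then p i else 0)"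
        have "k \<in> Qc c r" using p by (auto simp: k_def P_def Qc_def Zd_def nrm_le abs_le_iff PiE_iff; force)
        moreover have "restrict k {..<d} = p" using p
          by (auto simp: k_def P_def PiE_iff restrict_def fun_eq_iff extensional_def)
        ultimately show "p \<in> (\<lambda>k. restrict k {..<d}) ` Qc c r" by (metis image_eqI)
      qed
    qed
  qed
  have fP: "finite P" unfolding P_def by (intro finite_PiE) auto
  have cP: "card P = nat (2 * r + 1) ^ d"
    unfolding P_def by (subst card_PiE) (auto simp: prod_constant)
  show "finite (Qc c r)" using bij fP bij_betw_finite by blast
  show "card (Qc c r) = nat (2 * r + 1) ^ d" using bij_betw_same_card[OF bij] cP by simp
qed

end


lemma clamp_lip: "\<bar>max 0 (min 1 x) - max 0 (min 1 y)\<bar> \<le> \<bar>x - y\<bar>" for x y :: real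
  by (auto simp: max_def min_def abs_if)

context pg begin

definition bump :: "nat \<Rightarrow> (nat \<Rightarrow> int) \<Rightarrow> 'v \<Rightarrow> real" where
  "bump m c v = max 0 (min 1 ((2 * real m - of_int (nrm (kap v - c))) / real m))"

lemma bump_one: "0 < m \<Longrightarrow> nrm (kap v - c) \<le> int m \<Longrightarrow> bump m c v = 1"
  unfolding bump_def by (auto simp: field_simps)

lemma bump_zero: "0 < m \<Longrightarrow> 2 * int m \<le> nrm (kap v - c) \<Longrightarrow> bump m c v = 0"
proof -
  assume m: "0 < m" and h: "2 * int m \<le> nrm (kap v - c)"
  have "real_of_int (2 * int m) \<le> of_int (nrm (kap v - c))" using h by (simp only: of_int_le_iff)
  then have "2 * real m \<le> of_int (nrm (kap v - c))" by simp
  then have "(2 * real m - of_int (nrm (kap v - c))) / real m \<le> 0"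
    using m by (intro divide_nonpos_pos) auto
  then show ?thesis unfolding bump_def by simp
qed

lemma bump_nz: "0 < m \<Longrightarrow> bump m c v \<noteq> 0 \<Longrightarrow> nrm (kap v - c) < 2 * int m"
  using bump_zero[of m v c] by linarith

lemma bump_lip: assumes m: "0 < m"
  shows "\<bar>bump m c u - bump m c v\<bar> \<le> of_int (nrm (kap u - kap v)) / real m"
proof -
  have "\<bar>bump m c u - bump m c v\<bar> \<le> \<bar>(2 * real m - of_int (nrm (kap u - c))) / real m - (2 * real m - of_int (nrm (kap v - c))) / real m\<bar>"
    unfolding bump_def by (rule clamp_lip)
  also have "\<dots> = \<bar>(of_int (nrm (kap v - c)) - of_int (nrm (kap u - c))) / real m\<bar>"
    by (simp add: diff_divide_distrib[symmetric] algebra_simps)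
  also have "\<dots> = \<bar>of_int (nrm (kap v - c)) - of_int (nrm (kap u - c))\<bar> / real m"
    using m by (simp add: abs_divide)
  also have "\<dots> \<le> of_int (nrm (kap u - kap v)) / real m"
  proof (rule divide_right_mono)
    have r1: "nrm (kap v - c) - nrm (kap u - c) \<le> nrm ((kap v - c) - (kap u - c))" by (rule nrm_rev)
    have r2: "nrm (kap u - c) - nrm (kap v - c) \<le> nrm ((kap u - c) - (kap v - c))" by (rule nrm_rev)
    have e1: "(kap v - c) - (kap u - c) = kap v - kap u" and e2: "(kap u - c) - (kap v - c) = kap u - kap v"
      by (simp_all add: algebra_simps)
    have s1: "nrm (kap v - c) - nrm (kap u - c) \<le> nrm (kap u - kap v)" using r1 e1 nrm_sym[of "kap v" "kap u"] by simp
    have s2: "- (nrm (kap v - c) - nrm (kap u - c)) \<le> nrm (kap u - kap v)" using r2 e2 by simp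
    have "\<bar>nrm (kap v - c) - nrm (kap u - c)\<bar> \<le> nrm (kap u - kap v)" using s1 s2 by (simp only: abs_le_iff)
    then show "\<bar>of_int (nrm (kap v - c)) - of_int (nrm (kap u - c))\<bar> \<le> (of_int (nrm (kap u - kap v)) :: real)"
      by (metis of_int_abs of_int_diff of_int_le_iff)
  qed simp
  finally show ?thesis .
qed

lemma bump_edge: assumes m: "0 < m" and e: "e \<in> edges G"
  shows "(bump m c (tgt G e) - bump m c (src G e))\<^sup>2 \<le> (of_int (2 * C1 + C5) / real m)\<^sup>2"
proof -
  have "\<bar>bump m c (tgt G e) - bump m c (src G e)\<bar> \<le> of_int (nrm (kap (tgt G e) - kap (src G e))) / real m"
    by (rule bump_lip[OF m])
  also have "\<dots> \<le> of_int (2 * C1 + C5) / real m"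
    using edge_lip[OF e] m by (intro divide_right_mono) auto
  finally have "\<bar>bump m c (tgt G e) - bump m c (src G e)\<bar>\<^sup>2 \<le> (of_int (2 * C1 + C5) / real m)\<^sup>2"
    by (rule power_mono) simp
  then show ?thesis by simp
qed

definition Supp :: "nat \<Rightarrow> (nat \<Rightarrow> int) \<Rightarrow> 'e set" where
  "Supp m c = (\<lambda>(k, f). \<psi> k f) ` (Qc c (2 * int m + C1 + C5) \<times> FE)"

lemma Sup_fin: "finite (Supp m c)"
  unfolding Supp_def using Qc_card(1)[of "2 * int m + C1 + C5" c] C1_nonneg C5_nonneg FE(1) by auto

lemma Sup_sub: "Supp m c \<subseteq> edges G"
  unfolding Supp_def using psi_in FE(2) by (auto simp: Qc_def)

lemma Sup_card: "card (Supp m c) \<le> nat (2 * (2 * int m + C1 + C5) + 1) ^ d * card FE"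
proof -
  have "card (Supp m c) \<le> card (Qc c (2 * int m + C1 + C5) \<times> FE)"
    unfolding Supp_def by (rule card_image_le) (use Qc_card(1)[of "2 * int m + C1 + C5" c] C1_nonneg C5_nonneg FE(1) in auto)
  also have "\<dots> = nat (2 * (2 * int m + C1 + C5) + 1) ^ d * card FE"
    using Qc_card(2)[of "2 * int m + C1 + C5" c] C1_nonneg C5_nonneg by (simp add: card_cartesian_product)
  finally show ?thesis .
qed

lemma Sup_cover: assumes m: "0 < m" and e: "e \<in> edges G"
    and nz: "bump m c (src G e) \<noteq> 0 \<or> bump m c (tgt G e) \<noteq> 0"
  shows "e \<in> Supp m c"
proof -
  obtain k f where k: "k \<in> Zd d" and f: "f \<in> FE" and ef: "\<psi> k f = e" using FE(3)[OF e] by blast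
  obtain u where u: "u = src G e \<or> u = tgt G e" and bu: "bump m c u \<noteq> 0" using nz by blast
  have "nrm (k - c) \<le> nrm (kap u - c) + C1 + C5" using edge_loc[OF k f, of u c] u ef by auto
  moreover have "nrm (kap u - c) < 2 * int m" by (rule bump_nz[OF m bu])
  ultimately have "k \<in> Qc c (2 * int m + C1 + C5)" using k by (auto simp: Qc_def)
  then show ?thesis unfolding Supp_def using f ef by force
qed

lemma Sup_zero: assumes m: "0 < m" and e: "e \<in> edges G" and ne: "e \<notin> Supp m c"
  shows "bump m c (src G e) = 0" "bump m c (tgt G e) = 0"
  using Sup_cover[OF m e] ne by auto

definition Pl :: "nat \<Rightarrow> (nat \<Rightarrow> int) \<Rightarrow> 'e set" where
  "Pl m c = (\<lambda>k. \<psi> k f0) ` Qc c (int m - C1 - C6)"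

lemma Pl_one: assumes m: "0 < m" and e: "e \<in> Pl m c"
  shows "bump m c (src G e) = 1" "bump m c (tgt G e) = 1"
    "nrm (kap (src G e) - c) \<le> int m" "nrm (kap (tgt G e) - c) \<le> int m"
proof -
  obtain k where k: "k \<in> Zd d" "nrm (k - c) \<le> int m - C1 - C6" and ek: "e = \<psi> k f0"
    using e by (auto simp: Pl_def Qc_def)
  show a: "nrm (kap (src G e) - c) \<le> int m" using plat_loc[OF k(1), of "src G e" c] k ek by auto
  show b: "nrm (kap (tgt G e) - c) \<le> int m" using plat_loc[OF k(1), of "tgt G e" c] k ek by auto
  show "bump m c (src G e) = 1" by (rule bump_one[OF m a])
  show "bump m c (tgt G e) = 1" by (rule bump_one[OF m b])
qed

lemma Pl_sub: "Pl m c \<subseteq> edges G"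
  unfolding Pl_def using psi_in f0 by (auto simp: Qc_def)

lemma Pl_card: assumes "C1 + C6 \<le> int m" shows "card (Pl m c) = nat (2 * (int m - C1 - C6) + 1) ^ d"
proof -
  have "inj_on (\<lambda>k. \<psi> k f0) (Qc c (int m - C1 - C6))"
  proof (rule inj_onI)
    fix x y assume "x \<in> Qc c (int m - C1 - C6)" "y \<in> Qc c (int m - C1 - C6)" "\<psi> x f0 = \<psi> y f0"
    then show "x = y" using psi_inj[OF _ _ f0, of x y] by (simp add: Qc_def)
  qed
  then show ?thesis unfolding Pl_def using Qc_card(2)[of "int m - C1 - C6" c] assms by (simp add: card_image)
qed

lemma Pl_Sup: assumes m: "0 < m" shows "Pl m c \<subseteq> Supp m c"
proof
  fix e assume e: "e \<in> Pl m c"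
  have "e \<in> edges G" using e Pl_sub by blast
  moreover have "bump m c (src G e) \<noteq> 0" using Pl_one(1)[OF m e] by simp
  ultimately show "e \<in> Supp m c" using Sup_cover[OF m] by blast
qed

lemma Pl_fin: "0 < m \<Longrightarrow> finite (Pl m c)"
  using Pl_Sup Sup_fin finite_subset by blast

end


context pg begin

lemma far_zero: assumes m: "0 < m" and v: "nrm (kap v - c) \<le> int m" and f: "3 * int m \<le> nrm (c - c')"
  shows "bump m c' v = 0"
proof (rule bump_zero[OF m])
  have "nrm (c - c') - nrm (c - kap v) \<le> nrm ((c - c') - (c - kap v))" by (rule nrm_rev)
  moreover have "(c - c') - (c - kap v) = kap v - c'" by (simp add: algebra_simps)
  moreover have "nrm (c - kap v) = nrm (kap v - c)" by (rule nrm_sym)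
  ultimately have "nrm (c - c') - nrm (kap v - c) \<le> nrm (kap v - c')" by simp
  then show "2 * int m \<le> nrm (kap v - c')" using v f by linarith
qed

lemma sq3: "(x + y + z)\<^sup>2 \<le> 3 * (x\<^sup>2 + y\<^sup>2 + z\<^sup>2)" for x y z :: real
proof -
  have "0 \<le> (x - y)\<^sup>2 + (y - z)\<^sup>2 + (x - z)\<^sup>2" by simp
  then show ?thesis by (simp add: power2_eq_square algebra_simps)
qed

lemma est:
  fixes m :: nat and cen :: "nat \<Rightarrow> nat \<Rightarrow> int" and a :: "nat \<Rightarrow> real" and c0 :: real
  assumes m: "0 < m" and far: "\<And>i j. i < 3 \<Longrightarrow> j < 3 \<Longrightarrow> i \<noteq> j \<Longrightarrow> 3 * int m \<le> nrm (cen i - cen j)"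
    and mC: "C1 + C6 \<le> int m" and c0: "0 < c0" "\<And>e. e \<in> edges G \<Longrightarrow> c0 \<le> len G e"
  defines "hh \<equiv> (\<lambda>v. a 0 * bump m (cen 0) v + a 1 * bump m (cen 1) v + a 2 * bump m (cen 2) v)"
  shows "lin G hh \<in> H1 G"
    and "D2sq G (lin G hh) \<le> 3 * (of_int (2 * C1 + C5) / real m)\<^sup>2 / c0
             * real (nat (2 * (2 * int m + C1 + C5) + 1) ^ d * card FE) * ((a 0)\<^sup>2 + (a 1)\<^sup>2 + (a 2)\<^sup>2)"
    and "c0 * real (nat (2 * (int m - C1 - C6) + 1) ^ d) * ((a 0)\<^sup>2 + (a 1)\<^sup>2 + (a 2)\<^sup>2) \<le> L2sq G (lin G hh)"
proof -
  define S where "S = Supp m (cen 0) \<union> Supp m (cen 1) \<union> Supp m (cen 2)"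
  have Sf: "finite S" unfolding S_def using Sup_fin by auto
  have Ss: "S \<subseteq> edges G" unfolding S_def using Sup_sub by auto
  have z: "hh (src G e) = 0 \<and> hh (tgt G e) = 0" if "e \<in> edges G" "e \<notin> S" for e
    using that Sup_zero[OF m that(1)] unfolding S_def hh_def by auto
  note LP = lin_props[OF cG Sf Ss z]
  show "lin G hh \<in> H1 G" by (rule LP(1))
  define q where "q = (of_int (2 * C1 + C5) / real m)\<^sup>2"
  define N1 where "N1 = nat (2 * (2 * int m + C1 + C5) + 1) ^ d * card FE"
  define X where "X = (a 0)\<^sup>2 + (a 1)\<^sup>2 + (a 2)\<^sup>2"
  define Dl where "Dl j e = bump m (cen j) (tgt G e) - bump m (cen j) (src G e)" for j e
  have Dl_b: "(Dl j e)\<^sup>2 \<le> q * (if e \<in> Supp m (cen j) then 1 else 0)" if e: "e \<in> edges G" for j e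
  proof (cases "e \<in> Supp m (cen j)")
    case True then show ?thesis using bump_edge[OF m e, of "cen j"] by (simp add: Dl_def q_def)
  next
    case False then show ?thesis using Sup_zero[OF m e False] by (simp add: Dl_def q_def)
  qed
  have edge_b: "(hh (tgt G e) - hh (src G e))\<^sup>2 / len G e \<le>
      3 / c0 * ((a 0)\<^sup>2 * q * (if e \<in> Supp m (cen 0) then 1 else 0) + (a 1)\<^sup>2 * q * (if e \<in> Supp m (cen 1) then 1 else 0)
        + (a 2)\<^sup>2 * q * (if e \<in> Supp m (cen 2) then 1 else 0))" if e: "e \<in> edges G" for e
  proof -
    have eq: "hh (tgt G e) - hh (src G e) = a 0 * Dl 0 e + a 1 * Dl 1 e + a 2 * Dl 2 e"
      by (simp add: hh_def Dl_def algebra_simps)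
    have "(hh (tgt G e) - hh (src G e))\<^sup>2 \<le> 3 * ((a 0 * Dl 0 e)\<^sup>2 + (a 1 * Dl 1 e)\<^sup>2 + (a 2 * Dl 2 e)\<^sup>2)"
      unfolding eq by (rule sq3)
    also have "\<dots> \<le> 3 * ((a 0)\<^sup>2 * q * (if e \<in> Supp m (cen 0) then 1 else 0) + (a 1)\<^sup>2 * q * (if e \<in> Supp m (cen 1) then 1 else 0)
        + (a 2)\<^sup>2 * q * (if e \<in> Supp m (cen 2) then 1 else 0))"
      using mult_left_mono[OF Dl_b[OF e, of 0], of "(a 0)\<^sup>2"] mult_left_mono[OF Dl_b[OF e, of 1], of "(a 1)\<^sup>2"]
        mult_left_mono[OF Dl_b[OF e, of 2], of "(a 2)\<^sup>2"]
      by (simp add: power_mult_distrib mult.assoc)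
    finally have num: "(hh (tgt G e) - hh (src G e))\<^sup>2 \<le> 3 * ((a 0)\<^sup>2 * q * (if e \<in> Supp m (cen 0) then 1 else 0) + (a 1)\<^sup>2 * q * (if e \<in> Supp m (cen 1) then 1 else 0)
        + (a 2)\<^sup>2 * q * (if e \<in> Supp m (cen 2) then 1 else 0))" .
    have "(hh (tgt G e) - hh (src G e))\<^sup>2 / len G e \<le> (hh (tgt G e) - hh (src G e))\<^sup>2 / c0"
      by (rule divide_left_mono) (use c0 e lpos[OF e] in \<open>auto intro: mult_pos_pos\<close>)
    also have "\<dots> \<le> 3 * ((a 0)\<^sup>2 * q * (if e \<in> Supp m (cen 0) then 1 else 0) + (a 1)\<^sup>2 * q * (if e \<in> Supp m (cen 1) then 1 else 0)
        + (a 2)\<^sup>2 * q * (if e \<in> Supp m (cen 2) then 1 else 0)) / c0"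
      by (rule divide_right_mono[OF num]) (use c0 in auto)
    finally show ?thesis by simp
  qed
  have cnt: "(\<Sum>e\<in>S. (if e \<in> Supp m (cen j) then 1 else 0 :: real)) = real (card (Supp m (cen j)))" if "j < 3" for j
  proof -
    have "j = 0 \<or> j = 1 \<or> j = 2" using that by auto
    then have sub: "Supp m (cen j) \<subseteq> S" unfolding S_def by auto
    have "(\<Sum>e\<in>S. (if e \<in> Supp m (cen j) then 1 else 0 :: real)) = real (card (S \<inter> Supp m (cen j)))"
      using Sf by (simp add: sum.If_cases)
    then show ?thesis using sub by (simp add: Int_absorb1)
  qed
  have cardS: "real (card (Supp m (cen j))) \<le> real N1" for j
    unfolding N1_def using Sup_card[of m "cen j"] by linarith
  have qnn: "0 \<le> q" by (simp add: q_def)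
  have "D2sq G (lin G hh) = (\<Sum>e\<in>S. (hh (tgt G e) - hh (src G e))\<^sup>2 / len G e)" by (rule LP(2))
  also have "\<dots> \<le> (\<Sum>e\<in>S. 3 / c0 * ((a 0)\<^sup>2 * q * (if e \<in> Supp m (cen 0) then 1 else 0) + (a 1)\<^sup>2 * q * (if e \<in> Supp m (cen 1) then 1 else 0)
        + (a 2)\<^sup>2 * q * (if e \<in> Supp m (cen 2) then 1 else 0)))"
    using Ss by (intro sum_mono edge_b) blast
  also have "\<dots> = 3 / c0 * q * ((a 0)\<^sup>2 * (\<Sum>e\<in>S. (if e \<in> Supp m (cen 0) then 1 else 0 :: real))
        + (a 1)\<^sup>2 * (\<Sum>e\<in>S. (if e \<in> Supp m (cen 1) then 1 else 0 :: real)) + (a 2)\<^sup>2 * (\<Sum>e\<in>S. (if e \<in> Supp m (cen 2) then 1 else 0 :: real)))"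
    by (simp add: sum_distrib_left sum.distrib algebra_simps)
  also have "\<dots> = 3 / c0 * q * ((a 0)\<^sup>2 * real (card (Supp m (cen 0))) + (a 1)\<^sup>2 * real (card (Supp m (cen 1)))
        + (a 2)\<^sup>2 * real (card (Supp m (cen 2))))"
    using cnt[of 0] cnt[of 1] cnt[of 2] by simp
  also have "\<dots> \<le> 3 / c0 * q * ((a 0)\<^sup>2 * real N1 + (a 1)\<^sup>2 * real N1 + (a 2)\<^sup>2 * real N1)"
    using c0 qnn cardS[of 0] cardS[of 1] cardS[of 2]
    by (intro mult_left_mono add_mono) (auto intro: mult_left_mono)
  also have "\<dots> = 3 * q / c0 * real N1 * X" by (simp add: X_def algebra_simps)
  finally show "D2sq G (lin G hh) \<le> 3 * (of_int (2 * C1 + C5) / real m)\<^sup>2 / c0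
             * real (nat (2 * (2 * int m + C1 + C5) + 1) ^ d * card FE) * ((a 0)\<^sup>2 + (a 1)\<^sup>2 + (a 2)\<^sup>2)"
    by (simp add: q_def N1_def X_def)
  define N2 where "N2 = nat (2 * (int m - C1 - C6) + 1) ^ d"
  define I where "I e = integral {0..len G e} (\<lambda>x. (lin G hh e x)\<^sup>2)" for e
  have Inn: "0 \<le> I e" for e unfolding I_def by (rule lin_L_edge_nonneg)
  have hPl: "hh (src G e) = a j \<and> hh (tgt G e) = a j" if j: "j < 3" and e: "e \<in> Pl m (cen j)" for j e
  proof -
    have o: "bump m (cen j) (src G e) = 1" "bump m (cen j) (tgt G e) = 1"
      "nrm (kap (src G e) - cen j) \<le> int m" "nrm (kap (tgt G e) - cen j) \<le> int m"
      using Pl_one[OF m e] by auto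
    have zz: "bump m (cen i) (src G e) = 0 \<and> bump m (cen i) (tgt G e) = 0" if "i < 3" "i \<noteq> j" for i
      using far_zero[OF m o(3) far[OF j that(1) that(2)[symmetric]]] far_zero[OF m o(4) far[OF j that(1) that(2)[symmetric]]]
      by simp
    have "j = 0 \<or> j = 1 \<or> j = 2" using j by auto
    then show ?thesis using o zz[of 0] zz[of 1] zz[of 2] by (auto simp: hh_def)
  qed
  have IPl: "I e = (a j)\<^sup>2 * len G e" if "j < 3" "e \<in> Pl m (cen j)" for j e
    unfolding I_def using hPl[OF that] Pl_sub that(2) lpos by (intro lin_L_edge_const) auto
  have disj: "Pl m (cen i) \<inter> Pl m (cen j) = {}" if "i < 3" "j < 3" "i \<noteq> j" for i j
  proof (rule ccontr)
    assume "Pl m (cen i) \<inter> Pl m (cen j) \<noteq> {}"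
    then obtain e where ei: "e \<in> Pl m (cen i)" and ej: "e \<in> Pl m (cen j)" by blast
    have "bump m (cen i) (src G e) = 1" using Pl_one[OF m ei] by simp
    moreover have "nrm (kap (src G e) - cen j) \<le> int m" using Pl_one[OF m ej] by simp
    ultimately show False using far_zero[OF m _ far[OF that(2) that(1) that(3)[symmetric]]] by simp
  qed
  have PlS: "Pl m (cen j) \<subseteq> S" if "j < 3" for j
  proof -
    have "j = 0 \<or> j = 1 \<or> j = 2" using that by auto
    then show ?thesis using Pl_Sup[OF m, of "cen j"] unfolding S_def by auto
  qed
  have Plc: "real (card (Pl m (cen j))) = real N2" for j unfolding N2_def using Pl_card[OF mC] by simp
  have PlI: "c0 * real N2 * (a j)\<^sup>2 \<le> (\<Sum>e\<in>Pl m (cen j). I e)" if j: "j < 3" for j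
  proof -
    have "c0 * real N2 * (a j)\<^sup>2 = (\<Sum>e\<in>Pl m (cen j). (a j)\<^sup>2 * c0)"
      using Plc[of j] by (simp add: algebra_simps)
    also have "\<dots> \<le> (\<Sum>e\<in>Pl m (cen j). I e)"
    proof (rule sum_mono)
      fix e assume e: "e \<in> Pl m (cen j)"
      then have "c0 \<le> len G e" using c0(2) Pl_sub by blast
      then show "(a j)\<^sup>2 * c0 \<le> I e" using IPl[OF j e] by (simp add: mult_left_mono)
    qed
    finally show ?thesis .
  qed
  have "L2sq G (lin G hh) = (\<Sum>e\<in>S. I e)" unfolding I_def by (rule LP(3))
  also have "\<dots> \<ge> (\<Sum>e\<in>Pl m (cen 0) \<union> Pl m (cen 1) \<union> Pl m (cen 2). I e)"
    using PlS[of 0] PlS[of 1] PlS[of 2] Sf Inn by (intro sum_mono2) auto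
  moreover have "(\<Sum>e\<in>Pl m (cen 0) \<union> Pl m (cen 1) \<union> Pl m (cen 2). I e)
      = (\<Sum>e\<in>Pl m (cen 0). I e) + (\<Sum>e\<in>Pl m (cen 1). I e) + (\<Sum>e\<in>Pl m (cen 2). I e)"
  proof -
    have d1: "(Pl m (cen 0) \<union> Pl m (cen 1)) \<inter> Pl m (cen 2) = {}" using disj[of 0 2] disj[of 1 2] by auto
    have d2: "Pl m (cen 0) \<inter> Pl m (cen 1) = {}" using disj[of 0 1] by auto
    show ?thesis using Pl_fin[OF m] d1 d2 by (simp add: sum.union_disjoint)
  qed
  ultimately show "c0 * real (nat (2 * (int m - C1 - C6) + 1) ^ d) * ((a 0)\<^sup>2 + (a 1)\<^sup>2 + (a 2)\<^sup>2) \<le> L2sq G (lin G hh)"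
    using PlI[of 0] PlI[of 1] PlI[of 2] unfolding N2_def by (simp add: algebra_simps)
qed

end


context pg begin

lemma nrm_zero: "nrm 0 = 0"
  using nrm_le[of 0 0] nrm_nonneg[of 0] by simp

lemma ineq_main:
  fixes lam :: real
  assumes lam: "lam < 0"
  shows "\<exists>m (cen :: nat \<Rightarrow> nat \<Rightarrow> int) c0. 0 < m \<and> C1 + C6 \<le> int m \<and> 0 < c0 \<and> (\<forall>e\<in>edges G. c0 \<le> len G e) \<and>
     (\<forall>i j. i < 3 \<longrightarrow> j < 3 \<longrightarrow> i \<noteq> j \<longrightarrow> 3 * int m \<le> nrm (cen i - cen j)) \<and>
     (\<forall>j. cen j \<in> Zd d) \<and>
     3 * (of_int (2 * C1 + C5) / real m)\<^sup>2 / c0 * real (nat (2 * (2 * int m + C1 + C5) + 1) ^ d * card FE)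
       \<le> - lam * (c0 * real (nat (2 * (int m - C1 - C6) + 1) ^ d))"
proof -
  define c1 where "c1 = C1"
  define c5 where "c5 = C5"
  define c6 where "c6 = C6"
  have c1nn: "0 \<le> c1" and c5nn: "0 \<le> c5" and c6nn: "0 \<le> c6"
    unfolding c1_def c5_def c6_def using C1_nonneg C5_nonneg C6_nonneg by auto
  obtain c0 where c0: "0 < c0" "\<forall>e\<in>edges G. c0 \<le> len G e" using c0_ex by blast
  define A where "A = real_of_int (2 * c1 + c5)"
  define K where "K = 3 * A\<^sup>2 * 5 ^ d * real (card FE)"
  obtain n :: nat where n: "max (max (real_of_int (2 * c1 + 2 * c5 + 1)) (real_of_int (2 * (c1 + c6)))) (K / (- lam * c0\<^sup>2)) \<le> real n"
    using real_arch_simple by blast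
  define m where "m = Suc n"
  define M where "M = real m"
  have m0: "0 < m" by (simp add: m_def)
  have M1: "1 \<le> M" by (simp add: M_def m_def)
  have "real_of_int (2 * c1 + 2 * c5 + 1) \<le> real_of_int (int n)" using n by simp
  then have mA: "2 * c1 + 2 * c5 + 1 \<le> int m" unfolding m_def by arith
  have "real_of_int (2 * (c1 + c6)) \<le> real_of_int (int n)" using n by simp
  then have mB: "2 * (c1 + c6) \<le> int m" unfolding m_def by arith
  have mK: "K / (- lam * c0\<^sup>2) \<le> M" using n unfolding M_def m_def by simp
  have mC: "c1 + c6 \<le> int m" using mB c1nn c6nn by arith
  define cen where "cen j = (\<lambda>i::nat. if i = 0 then int (3 * m * j) else 0)" for j :: nat
  have cenZ: "cen j \<in> Zd d" for j using d_pos by (auto simp: cen_def Zd_def)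
  have far: "3 * int m \<le> nrm (cen i - cen j)" if "i \<noteq> j" for i j
  proof -
    have "\<bar>(cen i - cen j) 0\<bar> \<le> nrm (cen i - cen j)" by (rule comp_le[OF d_pos])
    moreover have "(cen i - cen j) 0 = 3 * int m * (int i - int j)" by (simp add: cen_def algebra_simps)
    moreover have "1 \<le> \<bar>int i - int j\<bar>" using that by arith
    then have "3 * int m * 1 \<le> 3 * int m * \<bar>int i - int j\<bar>" by (intro mult_left_mono) auto
    ultimately show ?thesis by (simp add: abs_mult)
  qed
  have "nat (2 * (2 * int m + c1 + c5) + 1) \<le> 5 * m" using mA c1nn c5nn by (simp add: nat_le_iff algebra_simps)
  then have pA: "real (nat (2 * (2 * int m + c1 + c5) + 1)) \<le> 5 * M"
    unfolding M_def by (metis of_nat_le_iff of_nat_mult of_nat_numeral)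
  have "m \<le> nat (2 * (int m - c1 - c6) + 1)" using mB c1nn c6nn by (simp add: le_nat_iff algebra_simps)
  then have pB: "M \<le> real (nat (2 * (int m - c1 - c6) + 1))"
    unfolding M_def by (metis of_nat_le_iff)
  have Mpos: "0 < M" using M1 by simp
  have l1: "3 * (A / M)\<^sup>2 / c0 * real (nat (2 * (2 * int m + c1 + c5) + 1) ^ d * card FE)
        \<le> 3 * (A / M)\<^sup>2 / c0 * ((5 * M) ^ d * real (card FE))"
  proof (rule mult_left_mono)
    have "real (nat (2 * (2 * int m + c1 + c5) + 1)) ^ d \<le> (5 * M) ^ d" by (rule power_mono[OF pA]) simp
    then show "real (nat (2 * (2 * int m + c1 + c5) + 1) ^ d * card FE) \<le> (5 * M) ^ d * real (card FE)"
      by (simp add: mult_right_mono)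
  qed (use c0 in simp)
  also have "\<dots> = K / (M\<^sup>2 * c0) * M ^ d"
    unfolding K_def using Mpos c0 by (simp add: power_mult_distrib field_simps)
  also have "\<dots> \<le> - lam * c0 * M ^ d"
  proof (rule mult_right_mono)
    have P: "0 < - lam * c0\<^sup>2" using lam c0 by (intro mult_pos_pos) auto
    have "K \<le> M * (- lam * c0\<^sup>2)" using mK unfolding pos_divide_le_eq[OF P] .
    also have "\<dots> \<le> M\<^sup>2 * (- lam * c0\<^sup>2)"
    proof (rule mult_right_mono)
      have "M * 1 \<le> M * M" using M1 by (intro mult_left_mono) auto
      then show "M \<le> M\<^sup>2" by (simp add: power2_eq_square)
    qed (use P in simp)
    finally have "K \<le> M\<^sup>2 * (- lam * c0\<^sup>2)" .
    then show "K / (M\<^sup>2 * c0) \<le> - lam * c0" using Mpos c0 by (simp add: divide_le_eq power2_eq_square algebra_simps)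
  qed (use Mpos in simp)
  also have "\<dots> \<le> - lam * (c0 * real (nat (2 * (int m - c1 - c6) + 1) ^ d))"
  proof -
    have "M ^ d \<le> real (nat (2 * (int m - c1 - c6) + 1)) ^ d" by (rule power_mono[OF pB]) (use Mpos in simp)
    then show ?thesis using lam c0 by (simp add: mult_left_mono)
  qed
  finally have fin: "3 * (A / M)\<^sup>2 / c0 * real (nat (2 * (2 * int m + c1 + c5) + 1) ^ d * card FE)
       \<le> - lam * (c0 * real (nat (2 * (int m - c1 - c6) + 1) ^ d))" .
  show ?thesis
    apply (rule exI[of _ m], rule exI[of _ cen], rule exI[of _ c0])
    using m0 mC c0 far cenZ fin unfolding A_def M_def c1_def c5_def c6_def by auto
qed

end


context pg begin

theorem main:
  fixes lam :: real
  assumes lam: "lam < 0"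
  shows "\<exists>Y. Y \<subseteq> H1 G \<and> module.subspace fscale Y \<and> vector_space.dim fscale Y = 3 \<and>
           (\<forall>w\<in>Y. D2sq G w + lam * L2sq G w \<le> lam / 2 * H1sq G w)"
proof -
  define lam' where "lam' = lam / (2 - lam)"
  have l2: "0 < 2 - lam" using lam by simp
  have lam': "lam' < 0" unfolding lam'_def using lam l2 by (simp add: divide_neg_pos)
  obtain m and cen :: "nat \<Rightarrow> nat \<Rightarrow> int" and c0 where m: "0 < m" and mC: "C1 + C6 \<le> int m"
    and c0: "0 < c0" "\<forall>e\<in>edges G. c0 \<le> len G e"
    and far: "\<And>i j. i < 3 \<Longrightarrow> j < 3 \<Longrightarrow> i \<noteq> j \<Longrightarrow> 3 * int m \<le> nrm (cen i - cen j)"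
    and cenZ: "\<And>j. cen j \<in> Zd d"
    and fin: "3 * (of_int (2 * C1 + C5) / real m)\<^sup>2 / c0 * real (nat (2 * (2 * int m + C1 + C5) + 1) ^ d * card FE)
       \<le> - lam' * (c0 * real (nat (2 * (int m - C1 - C6) + 1) ^ d))"
    using ineq_main[OF lam'] by blast
  define w where "w j = lin G (bump m (cen j))" for j
  define W where "W x0 x1 x2 = fscale x0 (w 0) + fscale x1 (w 1) + fscale x2 (w 2)" for x0 x1 x2
  have Wlin: "W x0 x1 x2 = lin G (\<lambda>v. x0 * bump m (cen 0) v + x1 * bump m (cen 1) v + x2 * bump m (cen 2) v)" for x0 x1 x2
    unfolding W_def w_def by (rule lin_comb[symmetric])
  have Wgood: "W x0 x1 x2 \<in> H1 G \<and> D2sq G (W x0 x1 x2) + lam * L2sq G (W x0 x1 x2) \<le> lam / 2 * H1sq G (W x0 x1 x2)" for x0 x1 x2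
  proof -
    define a where "a = (\<lambda>j::nat. if j = 0 then x0 else if j = 1 then x1 else x2)"
    have a: "a 0 = x0" "a 1 = x1" "a 2 = x2" by (simp_all add: a_def)
    have c0': "\<And>e. e \<in> edges G \<Longrightarrow> c0 \<le> len G e" using c0(2) by blast
    note E = est[where a = a, OF m far mC c0(1) c0']
    have E1: "W x0 x1 x2 \<in> H1 G" using E(1) unfolding Wlin a by simp
    define X where "X = x0\<^sup>2 + x1\<^sup>2 + x2\<^sup>2"
    have Xnn: "0 \<le> X" by (simp add: X_def)
    define P1 where "P1 = 3 * (of_int (2 * C1 + C5) / real m)\<^sup>2 / c0 * real (nat (2 * (2 * int m + C1 + C5) + 1) ^ d * card FE)"
    define N2 where "N2 = c0 * real (nat (2 * (int m - C1 - C6) + 1) ^ d)"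
    have D: "D2sq G (W x0 x1 x2) \<le> P1 * X" using E(2) unfolding Wlin a P1_def X_def by simp
    have L: "N2 * X \<le> L2sq G (W x0 x1 x2)" using E(3) unfolding Wlin a N2_def X_def by simp
    have "P1 * X \<le> (- lam' * N2) * X" using fin Xnn unfolding P1_def N2_def by (intro mult_right_mono) auto
    also have "\<dots> = - lam' * (N2 * X)" by simp
    also have "\<dots> \<le> - lam' * L2sq G (W x0 x1 x2)" using L lam' by (intro mult_left_mono) auto
    finally have DL: "D2sq G (W x0 x1 x2) \<le> - lam' * L2sq G (W x0 x1 x2)" using D by linarith
    have "(2 - lam) * D2sq G (W x0 x1 x2) \<le> (2 - lam) * (- lam' * L2sq G (W x0 x1 x2))"
      using DL l2 by (intro mult_left_mono) auto
    also have "\<dots> = - lam * L2sq G (W x0 x1 x2)" unfolding lam'_def using l2 by (simp add: field_simps)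
    finally have k: "2 * D2sq G (W x0 x1 x2) - lam * D2sq G (W x0 x1 x2) \<le> - (lam * L2sq G (W x0 x1 x2))"
      by (simp add: algebra_simps)
    have "D2sq G (W x0 x1 x2) + lam * L2sq G (W x0 x1 x2) \<le> lam / 2 * H1sq G (W x0 x1 x2)"
      unfolding H1sq_def using k by (simp add: algebra_simps)
    then show ?thesis using E1 by simp
  qed
  define ep where "ep j = \<psi> (cen j) f0" for j
  have epPl: "ep j \<in> Pl m (cen j)" for j
  proof -
    have "cen j \<in> Qc (cen j) (int m - C1 - C6)" using cenZ[of j] mC by (simp add: Qc_def nrm_zero)
    then show ?thesis unfolding ep_def Pl_def by blast
  qed
  have epE: "ep j \<in> edges G" for j using epPl Pl_sub by blast
  have bv: "bump m (cen i) (src G (ep j)) = (if i = j then 1 else 0)" if "i < 3" "j < 3" for i j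
  proof (cases "i = j")
    case True then show ?thesis using Pl_one(1)[OF m epPl[of j]] by simp
  next
    case False
    have "nrm (kap (src G (ep j)) - cen j) \<le> int m" using Pl_one(3)[OF m epPl[of j]] .
    then show ?thesis using far_zero[OF m _ far[OF that(2) that(1)]] False by auto
  qed
  have lin0: "lin G h (ep j) 0 = h (src G (ep j))" for h j
    using epE[of j] lpos[OF epE[of j]] by (simp add: lin_def)
  have Wval: "W x0 x1 x2 (ep 0) 0 = x0" "W x0 x1 x2 (ep 1) 0 = x1" "W x0 x1 x2 (ep 2) 0 = x2" for x0 x1 x2
    unfolding Wlin lin0 using bv by simp_all
  have wval: "w i (ep j) 0 = (if i = j then 1 else 0)" if "i < 3" "j < 3" for i j
    unfolding w_def lin0 using bv[OF that] .
  have v: "w 0 (ep 0) 0 = 1" "w 1 (ep 0) 0 = 0" "w 2 (ep 0) 0 = 0" "w 1 (ep 1) 0 = 1" "w 2 (ep 1) 0 = 0"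
    by (simp_all add: wval)
  have d1: "w 0 \<noteq> w 1" using v(1,2) by (metis zero_neq_one)
  have d2: "w 0 \<noteq> w 2" using v(1,3) by (metis zero_neq_one)
  have d3: "w 1 \<noteq> w 2" using v(4,5) by (metis zero_neq_one)
  note dist = d1 d2 d3
  interpret V: vector_space "fscale :: real \<Rightarrow> ('e \<Rightarrow> real \<Rightarrow> real) \<Rightarrow> 'e \<Rightarrow> real \<Rightarrow> real" by (rule vs_fscale)
  define B where "B = {w 0, w 1, w 2}"
  have Bf: "finite B" by (simp add: B_def)
  have sumB: "(\<Sum>v\<in>B. fscale (u v) v) = W (u (w 0)) (u (w 1)) (u (w 2))" for u
    unfolding B_def W_def using dist by (simp add: add.assoc)
  have indep: "\<not> V.dependent B"
  proof
    assume "V.dependent B"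
    then obtain u where u: "\<exists>v\<in>B. u v \<noteq> 0" and s: "(\<Sum>v\<in>B. fscale (u v) v) = 0"
      unfolding V.dependent_finite[OF Bf] by blast
    have W0: "W (u (w 0)) (u (w 1)) (u (w 2)) = 0" using s sumB by simp
    have "u (w 0) = 0" using Wval(1)[of "u (w 0)" "u (w 1)" "u (w 2)"] W0 by simp
    moreover have "u (w 1) = 0" using Wval(2)[of "u (w 0)" "u (w 1)" "u (w 2)"] W0 by simp
    moreover have "u (w 2) = 0" using Wval(3)[of "u (w 0)" "u (w 1)" "u (w 2)"] W0 by simp
    ultimately show False using u unfolding B_def by auto
  qed
  have cardB: "card B = 3" unfolding B_def using dist by simp
  show ?thesis
  proof (intro exI[of _ "V.span B"] conjI ballI)
    show "V.span B \<subseteq> H1 G"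
    proof
      fix x assume "x \<in> V.span B"
      then obtain u where "x = (\<Sum>v\<in>B. fscale (u v) v)" unfolding V.span_finite[OF Bf] by blast
      then show "x \<in> H1 G" using sumB Wgood by simp
    qed
    show "V.subspace (V.span B)" by (rule V.subspace_span)
    show "V.dim (V.span B) = 3" using V.dim_span_eq_card_independent[OF indep] cardB by simp
    fix x assume "x \<in> V.span B"
    then obtain u where "x = (\<Sum>v\<in>B. fscale (u v) v)" unfolding V.span_finite[OF Bf] by blast
    then show "D2sq G x + lam * L2sq G x \<le> lam / 2 * H1sq G x" using sumB Wgood by simp
  qed
qed

end

theorem lemma6p2:
  fixes G :: "('v, 'e) mgraph" and lam :: real
  assumes "periodic G" and "lam < 0"
  shows "\<exists>Y. Y \<subseteq> H1 G \<and> module.subspace fscale Y \<and> vector_space.dim fscale Y = 3 \<and>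
           (\<forall>w\<in>Y. D2sq G w + lam * L2sq G w \<le> lam / 2 * H1sq G w)"
proof -
  obtain d \<phi> \<psi> FE FV where
    cG: "class_G G" and inf: "infinite (edges G)" and
    aut: "\<forall>k\<in>Zd d. isom_aut G (\<phi> k) (\<psi> k)" and
    p0: "\<forall>v\<in>verts G. \<phi> 0 v = v" and s0: "\<forall>e\<in>edges G. \<psi> 0 e = e" and
    add: "\<forall>k\<in>Zd d. \<forall>l\<in>Zd d. (\<forall>v\<in>verts G. \<phi> (k + l) v = \<phi> k (\<phi> l v)) \<and>
                             (\<forall>e\<in>edges G. \<psi> (k + l) e = \<psi> k (\<psi> l e))" and
    free: "\<forall>k\<in>Zd d. k \<noteq> 0 \<longrightarrow> (\<forall>v\<in>verts G. \<phi> k v \<noteq> v) \<and> (\<forall>e\<in>edges G. \<psi> k e \<noteq> e)" and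
    FE1: "finite FE" and FE2: "FE \<subseteq> edges G" and FE3: "\<forall>e\<in>edges G. \<exists>k\<in>Zd d. \<exists>f\<in>FE. \<psi> k f = e" and
    FV1: "finite FV" and FV2: "FV \<subseteq> verts G" and FV3: "\<forall>v\<in>verts G. \<exists>k\<in>Zd d. \<exists>f\<in>FV. \<phi> k f = v"
    using assms(1) unfolding periodic_def by (elim conjE exE) (rule that; assumption)
  have FE': "finite FE" "FE \<subseteq> edges G" "\<forall>e\<in>edges G. \<exists>k\<in>Zd d. \<exists>f\<in>FE. \<psi> k f = e"
    using FE1 FE2 FE3 by auto
  have FV': "finite FV" "FV \<subseteq> verts G" "\<forall>v\<in>verts G. \<exists>k\<in>Zd d. \<exists>f\<in>FV. \<phi> k f = v"
    using FV1 FV2 FV3 by auto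
  interpret P: pg G d \<phi> \<psi> FE FV
    apply unfold_locales
    using cG apply simp
    using inf apply simp
    using aut apply blast
    using p0 apply blast
    using s0 apply blast
    using add apply blast
    using add apply blast
    using free apply blast
    using free apply blast
    using FE' apply simp
    using FE' apply simp
    using FE' apply blast
    using FV' apply simp
    using FV' apply simp
    using FV' apply blast
    done
  show ?thesis by (rule P.main[OF assms(2)])
qed


end
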